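(* Let $s\geq1$ be an integer and let $X$ and $Y$ be random variables with absolutely continuous distributions with densities $f_X$ and $f_Y$ and distribution functions $F_X,F_Y\in\mathcal{F}$. If, for some positive integer $k\leq s$ and every $a>0$ and $b\in\mathbb{R}$, the function $$ H_k(x)=\frac{1}{\prod_{j=1}^{k}\widetilde{\mu}_{Y,s-j}}\overline{T}_{Y,s-k}(x)-\frac{a^{k}}{\prod_{j=1}^{k}\widetilde{\mu}_{X,s-j}}\overline{T}_{X,s-k}(ax+b) $$ changes sign at most twice as $x$ traverses from $0$ to $+\infty$, and if the change of sign occurs twice it is in the order "$+,-,+$", then $F_X\leq_{s\text{-IFR}}F_Y$.
   Context: $\mathcal{F}$ denotes the family of distribution functions $F$ with $F(0)=0$ whose probability distribution has support contained in $[0,\infty)$. For a nonnegative random variable $X$ with density $f_X$: $\overline{T}_{X,0}=f_X$, $\widetilde{\mu}_{X,0}=1$, and for $s\geq1$, $x\geq0$, $\overline{T}_{X,s}(x)=\frac{1}{\widetilde{\mu}_{X,s-1}}\int_x^\infty \overline{T}_{X,s-1}(t)\,dt$ with $\widetilde{\mu}_{X,s}=\int_0^\infty \overline{T}_{X,s}(t)\,dt$, and $\overline{T}_{X,s}(x)=1$ for $x<0$ (for $s\geq1$). We write $F_X\leq_{s\text{-IFR}}F_Y$ ("$X$ is more $s$-IFR than $Y$") if $c_s(x)=\overline{T}_{Y,s}^{-1}(\overline{T}_{X,s}(x))$ is convex. *)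

theory Defs
  imports "HOL-Probability.Probability"
begin

definition distF_family :: "(real \<Rightarrow> real) set" where
  "distF_family = {F. F 0 = 0 \<and> (\<forall>x<0. F x = 0)}"

fun Tbar :: "(real \<Rightarrow> real) \<Rightarrow> nat \<Rightarrow> real \<Rightarrow> real" where
  "Tbar f 0 = f"
| "Tbar f (Suc s) = (\<lambda>x. if x < 0 then 1
      else (LBINT t:{x..}. Tbar f s t) / (if s = 0 then 1 else (LBINT t:{0..}. Tbar f s t)))"

definition mu_tilde :: "(real \<Rightarrow> real) \<Rightarrow> nat \<Rightarrow> real" where
  "mu_tilde f s = (if s = 0 then 1 else (LBINT t:{0..}. Tbar f s t))"

lemma Tbar_Suc: "Tbar f (Suc s) x = (if x < 0 then 1 else (LBINT t:{x..}. Tbar f s t) / mu_tilde f s)"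
  by (simp add: mu_tilde_def)

definition Tinv :: "(real \<Rightarrow> real) \<Rightarrow> real \<Rightarrow> real" where
  "Tinv T u = Inf {y. 0 \<le> y \<and> T y \<le> u}"

definition s_IFR_le :: "nat \<Rightarrow> (real \<Rightarrow> real) \<Rightarrow> (real \<Rightarrow> real) \<Rightarrow> bool" where
  "s_IFR_le s fX fY \<longleftrightarrow>
     convex_on {x. 0 \<le> x \<and> 0 < Tbar fX s x} (\<lambda>x. Tinv (Tbar fY s) (Tbar fX s x))"

definition sign_seq :: "(real \<Rightarrow> real) \<Rightarrow> real set \<Rightarrow> (nat \<Rightarrow> real) \<Rightarrow> nat \<Rightarrow> bool" where
  "sign_seq H S xs n \<longleftrightarrow> (\<forall>i\<le>n. xs i \<in> S) \<and>
     (\<forall>i<n. xs i < xs (Suc i) \<and> H (xs i) * H (xs (Suc i)) < 0)"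

definition sign_changes_le2_pmp :: "(real \<Rightarrow> real) \<Rightarrow> real set \<Rightarrow> bool" where
  "sign_changes_le2_pmp H S \<longleftrightarrow> \<not> (\<exists>xs. sign_seq H S xs 3) \<and>
     (\<forall>xs. sign_seq H S xs 2 \<longrightarrow> H (xs 0) > 0)"

definition H_fun :: "nat \<Rightarrow> nat \<Rightarrow> (real \<Rightarrow> real) \<Rightarrow> (real \<Rightarrow> real) \<Rightarrow> real \<Rightarrow> real \<Rightarrow> real \<Rightarrow> real" where
  "H_fun s k fX fY a b x =
     Tbar fY (s - k) x / (\<Prod>j=1..k. mu_tilde fY (s - j))
     - a ^ k / (\<Prod>j=1..k. mu_tilde fX (s - j)) * Tbar fX (s - k) (a * x + b)"

end

theory Submission
  imports Defs
begin

lemma tail_isCont: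
  fixes h :: "real \<Rightarrow> real"
  assumes h: "integrable lborel h"
  shows "isCont (\<lambda>x. LBINT u:{x..}. h u) x0"
proof (rule continuous_at_sequentiallyI)
  fix X :: "nat \<Rightarrow> real" assume X: "X \<longlonglongrightarrow> x0"
  have hm[measurable]: "h \<in> borel_measurable lborel" using h by auto
  show "(\<lambda>n. LBINT u:{X n..}. h u) \<longlonglongrightarrow> (LBINT u:{x0..}. h u)"
    unfolding set_lebesgue_integral_def
  proof (rule integral_dominated_convergence[where w="\<lambda>u. norm (h u)"])
    show "integrable lborel (\<lambda>u. norm (h u))" using h by auto
    show "AE u in lborel. (\<lambda>n. indicator {X n..} u *\<^sub>R h u) \<longlonglongrightarrow> indicator {x0..} u *\<^sub>R h u"
      using AE_lborel_singleton[of x0]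
    proof eventually_elim
      case (elim u)
      show ?case
      proof (cases "u < x0")
        case True
        have "eventually (\<lambda>n. u < X n) sequentially" using order_tendstoD(1)[OF X True] .
        then have "eventually (\<lambda>n. indicator {X n..} u *\<^sub>R h u = indicator {x0..} u *\<^sub>R h u) sequentially"
          by eventually_elim (use True in \<open>auto simp: indicator_def\<close>)
        then show ?thesis by (rule tendsto_eventually)
      next
        case False
        then have "x0 < u" using elim by auto
        have "eventually (\<lambda>n. X n < u) sequentially" using order_tendstoD(2)[OF X \<open>x0 < u\<close>] .
        then have "eventually (\<lambda>n. indicator {X n..} u *\<^sub>R h u = indicator {x0..} u *\<^sub>R h u) sequentially"
          by eventually_elim (use \<open>x0 < u\<close> in \<open>auto simp: indicator_def\<close>)
        then show ?thesis by (rule tendsto_eventually)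
      qed
    qed
    show "\<And>n. AE u in lborel. norm (indicator {X n..} u *\<^sub>R h u) \<le> norm (h u)"
      by (auto simp: indicator_def)
  qed auto
qed

lemma tail_lim0:
  fixes h :: "real \<Rightarrow> real"
  assumes h: "integrable lborel h"
  shows "((\<lambda>x. LBINT u:{x..}. h u) \<longlongrightarrow> 0) at_top"
proof (rule tendsto_at_topI_sequentially)
  fix X :: "nat \<Rightarrow> real" assume X: "filterlim X at_top sequentially"
  have hm[measurable]: "h \<in> borel_measurable lborel" using h by auto
  have "(\<lambda>n. LBINT u:{X n..}. h u) \<longlonglongrightarrow> integral\<^sup>L lborel (\<lambda>u. 0 *\<^sub>R h u)"
    unfolding set_lebesgue_integral_def
  proof (rule integral_dominated_convergence[where w="\<lambda>u. norm (h u)"])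
    show "integrable lborel (\<lambda>u. norm (h u))" using h by auto
    show "AE u in lborel. (\<lambda>n. indicator {X n..} u *\<^sub>R h u) \<longlonglongrightarrow> 0 *\<^sub>R h u"
    proof (rule AE_I2)
      fix u
      have "eventually (\<lambda>n. u + 1 \<le> X n) sequentially"
        using X by (simp add: filterlim_at_top)
      then have "eventually (\<lambda>n. indicator {X n..} u *\<^sub>R h u = 0) sequentially"
        by eventually_elim (auto simp: indicator_def)
      then show "(\<lambda>n. indicator {X n..} u *\<^sub>R h u) \<longlonglongrightarrow> 0 *\<^sub>R h u" by (simp add: tendsto_eventually)
    qed
    show "\<And>n. AE u in lborel. norm (indicator {X n..} u *\<^sub>R h u) \<le> norm (h u)"
      by (auto simp: indicator_def)
  qed auto
  then show "(\<lambda>n. LBINT u:{X n..}. h u) \<longlonglongrightarrow> 0" by simp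
qed

lemma tail_mono:
  fixes h :: "real \<Rightarrow> real"
  assumes h: "set_integrable lborel {x..} h" and nn: "\<And>u. x \<le> u \<Longrightarrow> 0 \<le> h u" and xx: "x \<le> x'"
  shows "(LBINT u:{x'..}. h u) \<le> (LBINT u:{x..}. h u)"
proof -
  have h': "set_integrable lborel {x'..} h"
    by (rule set_integrable_subset[OF h]) (use xx in auto)
  show ?thesis
    unfolding set_lebesgue_integral_def
    by (rule integral_mono) (use h h' xx nn in \<open>auto simp: set_integrable_def indicator_def\<close>)
qed

lemma tail_nonneg:
  fixes h :: "real \<Rightarrow> real"
  assumes nn: "\<And>u. x \<le> u \<Longrightarrow> 0 \<le> h u"
  shows "0 \<le> (LBINT u:{x..}. h u)"
  unfolding set_lebesgue_integral_def
  by (rule integral_nonneg_AE) (use nn in \<open>auto simp: indicator_def\<close>)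

lemma pos_integral:
  fixes h :: "real \<Rightarrow> real"
  assumes h: "set_integrable lborel {0..} h" and nn: "\<And>u. 0 \<le> u \<Longrightarrow> 0 \<le> h u"
    and h0: "h 0 = 1"
    and c: "\<forall>e>0. \<exists>d>0. \<forall>y\<ge>0. \<bar>y - 0\<bar> < d \<longrightarrow> \<bar>h y - h 0\<bar> < e"
  shows "0 < (LBINT u:{0..}. h u)"
proof -
  obtain d where d: "d > 0" "\<And>y. 0 \<le> y \<Longrightarrow> \<bar>y\<bar> < d \<Longrightarrow> \<bar>h y - 1\<bar> < 1/2"
    using c h0 by (metis diff_zero field_sum_of_halves half_gt_zero zero_less_one)
  have i1: "integrable lborel (\<lambda>u. indicator {0..d/2} u * (1/2::real))"
    using d by (intro integrable_mult_left integrable_real_indicator) (auto simp: emeasure_lborel_Icc)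
  have "(LBINT u. indicator {0..d/2} u * (1/2::real)) \<le> (LBINT u. indicator {0..} u *\<^sub>R h u)"
  proof (rule integral_mono[OF i1])
    show "integrable lborel (\<lambda>u. indicator {0..} u *\<^sub>R h u)" using h by (simp add: set_integrable_def)
    fix u
    show "indicator {0..d/2} u * (1/2) \<le> indicator {0..} u *\<^sub>R h u"
    proof (cases "0 \<le> u \<and> u \<le> d/2")
      case True
      then have "\<bar>h u - 1\<bar> < 1/2" using d by auto
      then have "h u > 1/2" by linarith
      then show ?thesis using True by (auto simp: indicator_def)
    next
      case False
      then show ?thesis using nn by (auto simp: indicator_def)
    qed
  qed
  moreover have "(LBINT u. indicator {0..d/2} u * (1/2::real)) = d/4"
    using d by (simp add: measure_lborel_Icc)
  ultimately show ?thesis using d unfolding set_lebesgue_integral_def by simp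
qed

definition rcont :: "(real \<Rightarrow> real) \<Rightarrow> bool" where
  "rcont T \<longleftrightarrow> (\<forall>x\<ge>0. \<forall>e>0. \<exists>d>0. \<forall>y\<ge>0. \<bar>y - x\<bar> < d \<longrightarrow> \<bar>T y - T x\<bar> < e)"

lemma isCont_rcont:
  assumes "\<And>x. isCont G x" and "\<And>x. 0 \<le> x \<Longrightarrow> T x = G x"
  shows "rcont T"
  unfolding rcont_def
proof (intro allI impI)
  fix x e :: real assume x: "0 \<le> x" and e: "0 < e"
  have "G \<midarrow>x\<rightarrow> G x" using assms(1) by (simp add: isCont_def)
  then obtain d where d: "d > 0" "\<And>y. y \<noteq> x \<Longrightarrow> norm (y - x) < d \<Longrightarrow> norm (G y - G x) < e"
    using e unfolding LIM_eq by blast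
  show "\<exists>d>0. \<forall>y\<ge>0. \<bar>y - x\<bar> < d \<longrightarrow> \<bar>T y - T x\<bar> < e"
  proof (intro exI[of _ d] conjI allI impI)
    fix y :: real assume "0 \<le> y" "\<bar>y - x\<bar> < d"
    then show "\<bar>T y - T x\<bar> < e"
      using d e x assms(2)[of x] assms(2)[of y] by (cases "y = x") auto
  qed (use d in auto)
qed

lemma Tbar_Suc_eq:
  assumes "0 \<le> x"
  shows "Tbar f (Suc m) x = (LBINT u:{x..}. indicator {0..} u * Tbar f m u) / mu_tilde f m"
proof -
  have "(LBINT u:{x..}. Tbar f m u) = (LBINT u:{x..}. indicator {0..} u * Tbar f m u)"
    unfolding set_lebesgue_integral_def
    by (rule Bochner_Integration.integral_cong) (use assms in \<open>auto simp: indicator_def\<close>)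
  moreover have "Tbar f (Suc m) x = (LBINT u:{x..}. Tbar f m u) / mu_tilde f m"
    by (subst Tbar_Suc) (use assms in simp)
  ultimately show ?thesis by simp
qed

lemma Tbar_props:
  fixes f :: "real \<Rightarrow> real"
  assumes f0: "\<forall>x. 0 \<le> f x" and int: "\<forall>j<s. set_integrable lborel {0..} (Tbar f j)"
    and one: "(LBINT u:{0..}. f u) = 1"
  shows "1 \<le> j \<Longrightarrow> j \<le> s \<Longrightarrow> (\<forall>x. 0 \<le> Tbar f j x) \<and> Tbar f j 0 = 1
     \<and> (\<forall>x y. 0 \<le> x \<longrightarrow> x \<le> y \<longrightarrow> Tbar f j y \<le> Tbar f j x) \<and> rcont (Tbar f j)
     \<and> (\<forall>e>0. \<exists>x\<ge>0. Tbar f j x < e)"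
proof (induction j)
  case 0 then show ?case by simp
next
  case (Suc m)
  have ms: "m < s" using Suc by simp
  define h where "h = (\<lambda>u. indicator {0..} u * Tbar f m u)"
  have hint: "integrable lborel h" using int ms by (simp add: h_def set_integrable_def)
  have hint': "set_integrable lborel {x..} h" for x
    unfolding set_integrable_def by (rule integrable_mult_indicator) (use hint in auto)
  have nn: "\<forall>x. 0 \<le> Tbar f m x"
  proof (cases m)
    case 0 then show ?thesis using f0 by simp
  next
    case (Suc m') then show ?thesis using Suc.IH Suc.prems by simp
  qed
  have hnn: "0 \<le> h u" for u using nn by (simp add: h_def)
  define \<mu> where "\<mu> = mu_tilde f m"
  have h0: "(LBINT u:{0..}. h u) = (LBINT u:{0..}. Tbar f m u)"
    unfolding set_lebesgue_integral_def h_def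
    by (rule Bochner_Integration.integral_cong) (auto simp: indicator_def)
  have mu: "\<mu> > 0 \<and> (LBINT u:{0..}. h u) = \<mu>"
  proof (cases m)
    case 0 then show ?thesis using one h0 by (simp add: \<mu>_def mu_tilde_def)
  next
    case (Suc m')
    then have P: "(\<forall>x. 0 \<le> Tbar f m x) \<and> Tbar f m 0 = 1 \<and> rcont (Tbar f m)"
      using Suc.IH Suc.prems by simp
    have "0 < (LBINT u:{0..}. Tbar f m u)"
      by (rule pos_integral) (use int ms P in \<open>auto simp: rcont_def\<close>)
    then show ?thesis using h0 Suc by (simp add: \<mu>_def mu_tilde_def)
  qed
  define G where "G = (\<lambda>x. (LBINT u:{x..}. h u) / \<mu>)"
  have eq: "Tbar f (Suc m) x = G x" if "0 \<le> x" for x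
    using Tbar_Suc_eq[OF that, of f m] by (simp add: G_def h_def \<mu>_def)
  have Gc: "isCont G x" for x
    unfolding G_def using mu by (intro continuous_intros tail_isCont hint) auto
  have Glim: "(G \<longlongrightarrow> 0) at_top"
    unfolding G_def using tendsto_divide[OF tail_lim0[OF hint] tendsto_const[of \<mu>]] mu by simp
  have A: "\<forall>x. 0 \<le> Tbar f (Suc m) x"
  proof
    fix x :: real
    show "0 \<le> Tbar f (Suc m) x"
    proof (cases "x < 0")
      case True then show ?thesis by (simp add: Tbar_Suc)
    next
      case False
      then show ?thesis using eq[of x] tail_nonneg[of x h] hnn mu by (simp add: G_def)
    qed
  qed
  have B: "Tbar f (Suc m) 0 = 1" using eq[of 0] mu by (simp add: G_def)
  have C: "\<forall>x y. 0 \<le> x \<longrightarrow> x \<le> y \<longrightarrow> Tbar f (Suc m) y \<le> Tbar f (Suc m) x"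
  proof (intro allI impI)
    fix x y :: real assume "0 \<le> x" "x \<le> y"
    then show "Tbar f (Suc m) y \<le> Tbar f (Suc m) x"
      using eq[of x] eq[of y] tail_mono[OF hint' hnn \<open>x \<le> y\<close>] mu
      by (simp add: G_def divide_right_mono)
  qed
  have D: "rcont (Tbar f (Suc m))" by (rule isCont_rcont[OF Gc eq])
  have E: "\<forall>e>0. \<exists>x\<ge>0. Tbar f (Suc m) x < e"
  proof (intro allI impI)
    fix e :: real assume "0 < e"
    then have "eventually (\<lambda>x. G x < e) at_top" using order_tendstoD(2)[OF Glim] by simp
    then obtain N where N: "\<And>x. N \<le> x \<Longrightarrow> G x < e" by (auto simp: eventually_at_top_linorder)
    show "\<exists>x\<ge>0. Tbar f (Suc m) x < e"
      by (rule exI[of _ "max N 0"]) (use N eq in auto)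
  qed
  show ?case using A B C D E by blast
qed

lemma affine_tail:
  fixes F :: "real \<Rightarrow> real"
  assumes a: "0 < a" and F: "set_integrable lborel {a * t + b..} F"
  shows "set_integrable lborel {t..} (\<lambda>v. F (a * v + b))"
    and "(LBINT u:{a * t + b..}. F u) = a * (LBINT v:{t..}. F (a * v + b))"
proof -
  define \<phi> where "\<phi> = (\<lambda>u. indicator {a * t + b..} u *\<^sub>R F u)"
  have phi: "integrable lborel \<phi>" using F by (simp add: \<phi>_def set_integrable_def)
  have pe: "\<phi> (b + a * v) = indicator {t..} v *\<^sub>R F (a * v + b)" for v
    using a by (auto simp: \<phi>_def indicator_def algebra_simps)
  have "integrable lborel (\<lambda>v. \<phi> (b + a * v))"
    using lborel_integrable_real_affine[OF phi, of a b] a by simp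
  then show "set_integrable lborel {t..} (\<lambda>v. F (a * v + b))"
    unfolding set_integrable_def pe .
  have "integral\<^sup>L lborel \<phi> = \<bar>a\<bar> *\<^sub>R integral\<^sup>L lborel (\<lambda>v. \<phi> (b + a * v))"
    using lborel_integral_real_affine[of a \<phi> b] a by simp
  then show "(LBINT u:{a * t + b..}. F u) = a * (LBINT v:{t..}. F (a * v + b))"
    unfolding set_lebesgue_integral_def pe using a by (simp add: \<phi>_def)
qed

lemma H_step:
  fixes fX fY :: "real \<Rightarrow> real"
  assumes intX: "\<forall>j<s. set_integrable lborel {0..} (Tbar fX j)"
    and intY: "\<forall>j<s. set_integrable lborel {0..} (Tbar fY j)"
    and a: "0 < a" and j: "1 \<le> j" "j \<le> s" and t: "0 \<le> t" "0 \<le> a * t + b"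
  shows "set_integrable lborel {t..} (H_fun s j fX fY a b)"
    and "H_fun s (j-1) fX fY a b t = (LBINT u:{t..}. H_fun s j fX fY a b u)"
proof -
  obtain i where ji: "j = Suc i" using j by (cases j) auto
  define m where "m = s - j"
  have sm: "s - i = Suc m" using j ji by (simp add: m_def)
  have ms: "m < s" using j by (simp add: m_def)
  define PX where "PX = (\<Prod>k=1..i. mu_tilde fX (s - k))"
  define PY where "PY = (\<Prod>k=1..i. mu_tilde fY (s - k))"
  have PXj: "(\<Prod>k=1..j. mu_tilde fX (s - k)) = PX * mu_tilde fX m"
    unfolding ji PX_def m_def by simp
  have PYj: "(\<Prod>k=1..j. mu_tilde fY (s - k)) = PY * mu_tilde fY m"
    unfolding ji PY_def m_def by simp
  have iY: "set_integrable lborel {t..} (Tbar fY m)"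
    by (rule set_integrable_subset[of _ "{0..}"]) (use intY ms t in auto)
  have iX0: "set_integrable lborel {a * t + b..} (Tbar fX m)"
    by (rule set_integrable_subset[of _ "{0..}"]) (use intX ms t in auto)
  note aff = affine_tail[OF a iX0]
  have HY: "H_fun s j fX fY a b = (\<lambda>u. Tbar fY m u * (1 / (PY * mu_tilde fY m))
       - Tbar fX m (a * u + b) * (a ^ j / (PX * mu_tilde fX m)))"
    unfolding H_fun_def PXj PYj by (auto simp: m_def)
  show I: "set_integrable lborel {t..} (H_fun s j fX fY a b)"
    unfolding HY by (intro set_integral_diff(1) set_integrable_mult_left iY aff(1))
  have T1: "Tbar fY (Suc m) t = (LBINT u:{t..}. Tbar fY m u) / mu_tilde fY m"
    by (subst Tbar_Suc) (use t in simp)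
  have T2: "Tbar fX (Suc m) (a * t + b) = (LBINT u:{a * t + b..}. Tbar fX m u) / mu_tilde fX m"
    by (subst Tbar_Suc) (use t in simp)
  have "H_fun s (j-1) fX fY a b t = Tbar fY (Suc m) t / PY - a ^ i / PX * Tbar fX (Suc m) (a * t + b)"
    unfolding H_fun_def PX_def PY_def using ji sm by simp
  also have "\<dots> = (LBINT u:{t..}. Tbar fY m u) * (1 / (PY * mu_tilde fY m))
       - (LBINT u:{t..}. Tbar fX m (a * u + b)) * (a ^ j / (PX * mu_tilde fX m))"
    unfolding T1 T2 aff(2) ji by (simp add: field_simps)
  also have "\<dots> = (LBINT u:{t..}. H_fun s j fX fY a b u)"
    unfolding HY by (subst set_integral_diff(2)) (auto intro!: set_integrable_mult_left iY aff(1))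
  finally show "H_fun s (j-1) fX fY a b t = (LBINT u:{t..}. H_fun s j fX fY a b u)" .
qed

lemma sign_step:
  fixes G h :: "real \<Rightarrow> real"
  assumes int: "\<And>t. x1 \<le> t \<Longrightarrow> set_integrable lborel {t..} h"
    and eq: "\<And>t. x1 \<le> t \<Longrightarrow> G t = (LBINT u:{t..}. h u)"
    and pq: "x1 \<le> p" "p < q" "q < r" and G: "G p \<le> 0" "0 < G q" "G r < 0"
  shows "\<exists>p' q' r'. x1 \<le> p' \<and> p' < q' \<and> q' < r' \<and> h p' < 0 \<and> 0 < h q' \<and> h r' < 0"
proof -
  have ip: "integrable lborel (\<lambda>u. indicator {p..} u *\<^sub>R h u)"
    using int[of p] pq by (simp add: set_integrable_def)
  have iq: "integrable lborel (\<lambda>u. indicator {q..} u *\<^sub>R h u)"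
    using int[of q] pq by (simp add: set_integrable_def)
  have ir: "integrable lborel (\<lambda>u. indicator {r..} u *\<^sub>R h u)"
    using int[of r] pq by (simp add: set_integrable_def)
  obtain r' where r': "r \<le> r'" "h r' < 0"
  proof (rule ccontr)
    assume "\<not> thesis"
    then have "\<And>u. r \<le> u \<Longrightarrow> 0 \<le> h u" using that by force
    then have "0 \<le> (LBINT u:{r..}. h u)" by (rule tail_nonneg)
    then show False using G eq[of r] pq by simp
  qed
  obtain q' where q': "q \<le> q'" "q' < r" "0 < h q'"
  proof (rule ccontr)
    assume "\<not> thesis"
    then have hn: "\<And>u. q \<le> u \<Longrightarrow> u < r \<Longrightarrow> h u \<le> 0" using that by force
    have "(LBINT u:{q..}. h u) \<le> (LBINT u:{r..}. h u)"
      unfolding set_lebesgue_integral_def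
    proof (rule integral_mono[OF iq ir])
      fix u show "indicator {q..} u *\<^sub>R h u \<le> indicator {r..} u *\<^sub>R h u"
        using hn[of u] pq by (auto simp: indicator_def)
    qed
    then show False using G eq[of q] eq[of r] pq by simp
  qed
  obtain p' where p': "p \<le> p'" "p' < q" "h p' < 0"
  proof (rule ccontr)
    assume "\<not> thesis"
    then have hn: "\<And>u. p \<le> u \<Longrightarrow> u < q \<Longrightarrow> 0 \<le> h u" using that by force
    have "(LBINT u:{q..}. h u) \<le> (LBINT u:{p..}. h u)"
      unfolding set_lebesgue_integral_def
    proof (rule integral_mono[OF iq ip])
      fix u show "indicator {q..} u *\<^sub>R h u \<le> indicator {p..} u *\<^sub>R h u"
        using hn[of u] pq by (auto simp: indicator_def)
    qed
    then show False using G eq[of q] eq[of p] pq by simp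
  qed
  show ?thesis
    by (rule exI[of _ p'], rule exI[of _ q'], rule exI[of _ r']) (use p' q' r' pq in auto)
qed

lemma propagate:
  fixes fX fY :: "real \<Rightarrow> real"
  assumes intX: "\<forall>j<s. set_integrable lborel {0..} (Tbar fX j)"
    and intY: "\<forall>j<s. set_integrable lborel {0..} (Tbar fY j)"
    and a: "0 < a" and x1: "0 \<le> x1" "0 \<le> a * x1 + b" and ks: "k \<le> s"
    and pat: "x1 \<le> p0" "p0 < q0" "q0 < r0" "H_fun s 0 fX fY a b p0 \<le> 0"
      "0 < H_fun s 0 fX fY a b q0" "H_fun s 0 fX fY a b r0 < 0"
  shows "1 \<le> j \<Longrightarrow> j \<le> k \<Longrightarrow> \<exists>p q r. x1 \<le> p \<and> p < q \<and> q < r \<and>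
     H_fun s j fX fY a b p < 0 \<and> 0 < H_fun s j fX fY a b q \<and> H_fun s j fX fY a b r < 0"
proof (induction j)
  case 0 then show ?case by simp
next
  case (Suc i)
  have tt: "0 \<le> t \<and> 0 \<le> a * t + b" if "x1 \<le> t" for t
  proof -
    have "a * x1 \<le> a * t" using that a by simp
    then show ?thesis using that x1 by simp
  qed
  have int: "set_integrable lborel {t..} (H_fun s (Suc i) fX fY a b)" if "x1 \<le> t" for t
    using H_step(1)[OF intX intY a _ _ conjunct1[OF tt[OF that]] conjunct2[OF tt[OF that]], of "Suc i"] Suc.prems ks
    by simp
  have eq: "H_fun s i fX fY a b t = (LBINT u:{t..}. H_fun s (Suc i) fX fY a b u)" if "x1 \<le> t" for t
    using H_step(2)[OF intX intY a _ _ conjunct1[OF tt[OF that]] conjunct2[OF tt[OF that]], of "Suc i"] Suc.prems ks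
    by simp
  show ?case
  proof (cases i)
    case 0
    show ?thesis by (rule sign_step[OF int eq pat(1-3)]) (use pat 0 in auto)
  next
    case (Suc i')
    then obtain p q r where P: "x1 \<le> p" "p < q" "q < r" "H_fun s i fX fY a b p < 0"
       "0 < H_fun s i fX fY a b q" "H_fun s i fX fY a b r < 0"
      using Suc.IH Suc.prems by auto
    show ?thesis by (rule sign_step[OF int eq P(1-3)]) (use P in auto)
  qed
qed

lemma no_bad:
  fixes fX fY :: "real \<Rightarrow> real"
  assumes intX: "\<forall>j<s. set_integrable lborel {0..} (Tbar fX j)"
    and intY: "\<forall>j<s. set_integrable lborel {0..} (Tbar fY j)"
    and ks: "1 \<le> k" "k \<le> s"
    and hyp: "\<forall>a>0. \<forall>b. sign_changes_le2_pmp (H_fun s k fX fY a b) {0..}"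
    and pts: "0 \<le> y1" "0 \<le> z1" "z1 < z" "z < z2" "y1 < y2"
      "(y - y1) * (z2 - z1) = (y2 - y1) * (z - z1)"
    and v: "Tbar fY s z1 \<le> Tbar fX s y1" "Tbar fX s y < Tbar fY s z" "Tbar fY s z2 < Tbar fX s y2"
  shows False
proof -
  define a where "a = (y2 - y1) / (z2 - z1)"
  define b where "b = y1 - a * z1"
  have a: "0 < a" using pts by (simp add: a_def)
  have e1: "a * z1 + b = y1" by (simp add: b_def)
  have nz: "z2 - z1 \<noteq> 0" using pts by simp
  have e2: "a * z + b = y"
  proof -
    have "a * z + b = y1 + a * (z - z1)" by (simp add: b_def algebra_simps)
    also have "a * (z - z1) = ((y2 - y1) * (z - z1)) / (z2 - z1)" by (simp add: a_def)
    also have "\<dots> = ((y - y1) * (z2 - z1)) / (z2 - z1)" using pts by simp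
    also have "\<dots> = y - y1" using nz by simp
    finally show ?thesis by simp
  qed
  have e3: "a * z2 + b = y2"
  proof -
    have "a * z2 + b = y1 + a * (z2 - z1)" by (simp add: b_def algebra_simps)
    also have "a * (z2 - z1) = y2 - y1" using nz by (simp add: a_def)
    finally show ?thesis by simp
  qed
  have H0: "H_fun s 0 fX fY a b x = Tbar fY s x - Tbar fX s (a * x + b)" for x
    by (simp add: H_fun_def)
  obtain p q r where P: "z1 \<le> p" "p < q" "q < r" "H_fun s k fX fY a b p < 0"
      "0 < H_fun s k fX fY a b q" "H_fun s k fX fY a b r < 0"
    using propagate[OF intX intY a pts(2), of b k z1 z z2 k] ks pts v e1 e2 e3 H0 by auto
  define xs where "xs = (\<lambda>n::nat. if n = 0 then p else if n = 1 then q else r)"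
  have "sign_seq (H_fun s k fX fY a b) {0..} xs 2"
    unfolding sign_seq_def
  proof (intro conjI allI impI)
    fix i :: nat assume "i \<le> 2" then show "xs i \<in> {0..}" using P pts by (auto simp: xs_def)
  next
    fix i :: nat assume "i < 2"
    then have "i = 0 \<or> i = 1" by auto
    then show "xs i < xs (Suc i)" using P by (auto simp: xs_def)
  next
    fix i :: nat assume "i < 2"
    then have "i = 0 \<or> i = 1" by auto
    then show "H_fun s k fX fY a b (xs i) * H_fun s k fX fY a b (xs (Suc i)) < 0"
      using P by (auto simp: xs_def mult_neg_pos mult_pos_neg)
  qed
  then have "H_fun s k fX fY a b (xs 0) > 0"
    using hyp a unfolding sign_changes_le2_pmp_def by blast
  then show False using P by (simp add: xs_def)
qed


definition Tprops :: "(real \<Rightarrow> real) \<Rightarrow> bool" where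
  "Tprops T \<longleftrightarrow> (\<forall>x. 0 \<le> T x) \<and> T 0 = 1
     \<and> (\<forall>x y. 0 \<le> x \<longrightarrow> x \<le> y \<longrightarrow> T y \<le> T x) \<and> rcont T
     \<and> (\<forall>e>0. \<exists>x\<ge>0. T x < e)"

definition Bad :: "(real \<Rightarrow> real) \<Rightarrow> (real \<Rightarrow> real) \<Rightarrow> bool" where
  "Bad TX TY \<longleftrightarrow> (\<exists>y1 z1 y z y2 z2. 0 \<le> y1 \<and> 0 \<le> z1 \<and> z1 < z \<and> z < z2 \<and> y1 < y2 \<and>
      (y - y1) * (z2 - z1) = (y2 - y1) * (z - z1) \<and>
      TY z1 \<le> TX y1 \<and> TX y < TY z \<and> TY z2 < TX y2)"

lemma noflat:
  assumes PX: "Tprops TX" and PY: "Tprops TY" and nb: "\<not> Bad TX TY"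
    and pq: "0 \<le> p" "p < q" and pos: "0 < TY q"
  shows "TY q < TY p"
proof (rule ccontr)
  assume "\<not> TY q < TY p"
  moreover have "TY q \<le> TY p" using PY pq unfolding Tprops_def by auto
  ultimately have eqv: "TY q = TY p" by simp
  define l where "l = TY p"
  have l: "0 < l" using pos eqv by (simp add: l_def)
  have l1: "l \<le> 1" using PY pq unfolding Tprops_def l_def by (metis order_refl)
  obtain z0 where z0: "0 \<le> z0" "TY z0 < l" using PY l unfolding Tprops_def by blast
  have qz0: "q < z0"
  proof (rule ccontr)
    assume "\<not> q < z0"
    then have "TY q \<le> TY z0" using PY z0 unfolding Tprops_def by auto
    then show False using z0 eqv by (simp add: l_def)
  qed
  obtain Y0 where Y0: "0 \<le> Y0" "TX Y0 < l" using PX l unfolding Tprops_def by blast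
  define S where "S = {y. 0 \<le> y \<and> l \<le> TX y}"
  have S0: "0 \<in> S" using PX l1 unfolding S_def Tprops_def by auto
  have Sb: "y \<le> Y0" if "y \<in> S" for y
  proof (rule ccontr)
    assume "\<not> y \<le> Y0"
    then have "TX y \<le> TX Y0" using PX Y0 unfolding Tprops_def by auto
    then show False using that Y0 by (auto simp: S_def)
  qed
  have bdd: "bdd_above S" using Sb by (meson bdd_above.I)
  define ys where "ys = Sup S"
  have ys0: "0 \<le> ys" using cSup_upper[OF S0 bdd] by (simp add: ys_def)
  have rc: "rcont TX" using PX by (simp add: Tprops_def)
  have ysS: "l \<le> TX ys"
  proof (rule ccontr)
    assume "\<not> l \<le> TX ys"
    then obtain d where d: "d > 0" "\<And>y. 0 \<le> y \<Longrightarrow> \<bar>y - ys\<bar> < d \<Longrightarrow> \<bar>TX y - TX ys\<bar> < l - TX ys"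
      using rc ys0 unfolding rcont_def by (metis diff_gt_0_iff_gt not_le)
    have "\<exists>y\<in>S. ys - d < y" using less_cSupD[of S "ys - d"] S0 d by (auto simp: ys_def)
    then obtain y where y: "y \<in> S" "ys - d < y" by blast
    have "y \<le> ys" using cSup_upper[OF y(1) bdd] by (simp add: ys_def)
    then have "\<bar>TX y - TX ys\<bar> < l - TX ys" using d y by (auto simp: S_def)
    then show False using y by (auto simp: S_def)
  qed
  have above: "TX y < l" if "ys < y" for y
  proof (rule ccontr)
    assume "\<not> TX y < l"
    then have "y \<in> S" using that ys0 by (auto simp: S_def)
    then have "y \<le> ys" using cSup_upper[OF _ bdd] by (simp add: ys_def)
    then show False using that by simp
  qed
  define l0 where "l0 = TY z0"
  obtain d where d: "d > 0" "\<And>y. 0 \<le> y \<Longrightarrow> \<bar>y - ys\<bar> < d \<Longrightarrow> \<bar>TX y - TX ys\<bar> < l - l0"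
    using rc ys0 z0 unfolding rcont_def l0_def by (metis diff_gt_0_iff_gt)
  define t0 where "t0 = (z0 - p) / (q - p)"
  have t0: "1 < t0" using pq qz0 by (simp add: t0_def)
  define e where "e = d / (2 * t0)"
  have e: "0 < e" using d t0 by (simp add: e_def)
  have te: "t0 * e = d / 2" using t0 by (simp add: e_def)
  have "Bad TX TY"
    unfolding Bad_def
  proof (intro exI conjI)
    show "0 \<le> ys" by fact
    show "0 \<le> p" by fact
    show "p < q" by fact
    show "q < z0" by fact
    show "ys < ys + t0 * e" using te d by simp
    show "(ys + e - ys) * (z0 - p) = (ys + t0 * e - ys) * (q - p)"
      using pq by (simp add: t0_def)
    show "TY p \<le> TX ys" using ysS by (simp add: l_def)
    show "TX (ys + e) < TY q" using above[of "ys + e"] e eqv by (simp add: l_def)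
    have "\<bar>TX (ys + t0 * e) - TX ys\<bar> < l - l0" using d(2)[of "ys + t0 * e"] te d ys0 by simp
    then show "TY z0 < TX (ys + t0 * e)" using ysS by (simp add: l0_def)
  qed
  then show False using nb by simp
qed

lemma Tinv_facts:
  assumes PY: "Tprops TY" and u: "0 < u"
  shows "0 \<le> Tinv TY u"
    and "\<And>z. 0 \<le> z \<Longrightarrow> z < Tinv TY u \<Longrightarrow> u < TY z"
    and "TY (Tinv TY u) \<le> u"
    and "\<And>u'. 0 < u' \<Longrightarrow> u' \<le> u \<Longrightarrow> Tinv TY u \<le> Tinv TY u'"
proof -
  define S where "S = (\<lambda>u. {y. 0 \<le> y \<and> TY y \<le> u})"
  have T: "Tinv TY u = Inf (S u)" for u by (simp add: Tinv_def S_def)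
  have ne: "S v \<noteq> {}" if "0 < v" for v
  proof -
    have L: "\<forall>e>0. \<exists>x\<ge>0. TY x < e" using PY by (simp add: Tprops_def)
    have "\<exists>x\<ge>0. TY x < v" using L that by simp
    then obtain x where "x \<ge> 0" "TY x < v" by blast
    then have "x \<in> S v" by (simp add: S_def)
    then show ?thesis by blast
  qed
  have bdd: "bdd_below (S v)" for v by (rule bdd_belowI[of _ 0]) (auto simp: S_def)
  show i: "0 \<le> Tinv TY u" unfolding T by (rule cInf_greatest[OF ne[OF u]]) (auto simp: S_def)
  show "u < TY z" if "0 \<le> z" "z < Tinv TY u" for z
  proof (rule ccontr)
    assume "\<not> u < TY z"
    then have "z \<in> S u" using that by (auto simp: S_def)
    then have "Inf (S u) \<le> z" by (rule cInf_lower[OF _ bdd])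
    then show False using that T by simp
  qed
  show "TY (Tinv TY u) \<le> u"
  proof (rule ccontr)
    assume a: "\<not> TY (Tinv TY u) \<le> u"
    have rc: "rcont TY" using PY by (simp add: Tprops_def)
    have ep: "TY (Tinv TY u) - u > 0" using a by simp
    obtain d where d: "d > 0" "\<And>y. 0 \<le> y \<Longrightarrow> \<bar>y - Tinv TY u\<bar> < d \<Longrightarrow> \<bar>TY y - TY (Tinv TY u)\<bar> < TY (Tinv TY u) - u"
      using rc i ep unfolding rcont_def by blast
    have "Inf (S u) < Inf (S u) + d" using d by simp
    then obtain z where z: "z \<in> S u" "z < Inf (S u) + d"
      using cInf_lessD[of "S u" "Inf (S u) + d"] ne[OF u] by blast
    have "Inf (S u) \<le> z" by (rule cInf_lower[OF z(1) bdd])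
    then have "\<bar>TY z - TY (Tinv TY u)\<bar> < TY (Tinv TY u) - u" using d z T by (auto simp: S_def)
    then show False using z by (auto simp: S_def)
  qed
  show "Tinv TY u \<le> Tinv TY u'" if "0 < u'" "u' \<le> u" for u'
    unfolding T by (rule cInf_superset_mono[OF ne[OF that(1)] bdd]) (use that in \<open>auto simp: S_def\<close>)
qed

lemma chord_ineq:
  assumes PX: "Tprops TX" and PY: "Tprops TY" and nb: "\<not> Bad TX TY"
    and y12: "0 \<le> y1" "y1 < y2" "0 < TX y2" and t: "0 < t" "t < 1"
  shows "Tinv TY (TX ((1 - t) * y1 + t * y2)) \<le> (1 - t) * Tinv TY (TX y1) + t * Tinv TY (TX y2)"
proof (rule ccontr)
  define w where "w = (1 - t) * y1 + t * y2"
  define c where "c = (\<lambda>y. Tinv TY (TX y))"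
  assume "\<not> ?thesis"
  then have cw: "(1 - t) * c y1 + t * c y2 < c w" by (simp add: c_def w_def)
  have wy1: "w - y1 = t * (y2 - y1)" by (simp add: w_def algebra_simps)
  have wy2: "y2 - w = (1 - t) * (y2 - y1)" by (simp add: w_def algebra_simps)
  have "0 < t * (y2 - y1)" using t y12 by simp
  then have w1: "y1 < w" using wy1 by linarith
  have "0 < (1 - t) * (y2 - y1)" using t y12 by simp
  then have w2: "w < y2" using wy2 by linarith
  have mono: "TX y \<le> TX x" if "0 \<le> x" "x \<le> y" for x y using PX that unfolding Tprops_def by auto
  have p1: "0 < TX y1" using mono[of y1 y2] y12 by simp
  have pw: "0 < TX w" using mono[of w y2] y12 w1 w2 by simp
  have c12: "c y1 \<le> c y2" unfolding c_def by (rule Tinv_facts(4)[OF PY p1 y12(3) mono]) (use y12 in auto)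
  define mc where "mc = (c y2 - c y1) / (y2 - y1)"
  define ms where "ms = (c w - c y1) / (w - y1)"
  have mc0: "0 \<le> mc" using c12 y12 by (simp add: mc_def)
  have "mc * (w - y1) = t * (c y2 - c y1)" using y12 by (simp add: mc_def wy1)
  also have "\<dots> < c w - c y1" using cw by (simp add: algebra_simps)
  finally have "mc * (w - y1) < c w - c y1" .
  then have mcs: "mc < ms" using w1 by (simp add: ms_def field_simps)
  define m where "m = (mc + ms) / 2"
  have m1: "mc < m" "m < ms" using mcs by (simp_all add: m_def)
  define z1 z z2 where "z1 = c y1" and "z = c y1 + m * (w - y1)" and "z2 = c y1 + m * (y2 - y1)"
  have m0: "0 < m" using m1 mc0 by simp
  have "Bad TX TY"
    unfolding Bad_def
  proof (intro exI conjI)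
    show "0 \<le> y1" by fact
    show "0 \<le> z1" using Tinv_facts(1)[OF PY p1] by (simp add: z1_def c_def)
    show "z1 < z" using m0 w1 by (simp add: z1_def z_def)
    show "z < z2" using m0 w2 by (simp add: z_def z2_def)
    show "y1 < y2" by fact
    show "(w - y1) * (z2 - z1) = (y2 - y1) * (z - z1)" by (simp add: z1_def z_def z2_def)
    show "TY z1 \<le> TX y1" using Tinv_facts(3)[OF PY p1] by (simp add: z1_def c_def)
    have "m * (w - y1) < ms * (w - y1)" using m1 w1 by simp
    also have "\<dots> = c w - c y1" using w1 by (simp add: ms_def)
    finally have zl: "z < c w" by (simp add: z_def)
    have z0: "0 \<le> z" using Tinv_facts(1)[OF PY p1] m0 w1 by (simp add: z_def c_def)
    show "TX w < TY z" using Tinv_facts(2)[OF PY pw z0] zl by (simp add: c_def)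
    have "mc * (y2 - y1) < m * (y2 - y1)" using m1 y12 by simp
    then have z2g: "c y2 < z2" using y12 by (simp add: z2_def mc_def)
    have c20: "0 \<le> c y2" using Tinv_facts(1)[OF PY y12(3)] by (simp add: c_def)
    show "TY z2 < TX y2"
    proof (cases "0 < TY z2")
      case True
      have "TY z2 < TY (c y2)" by (rule noflat[OF PX PY nb c20 z2g True])
      also have "\<dots> \<le> TX y2" using Tinv_facts(3)[OF PY y12(3)] by (simp add: c_def)
      finally show ?thesis .
    next
      case False then show ?thesis using y12 by simp
    qed
  qed
  then show False using nb by simp
qed


lemma density_one:
  fixes f :: "real \<Rightarrow> real"
  assumes P: "prob_space M" and dist: "distributed M lborel X (\<lambda>x. ennreal (f x))"
    and f0: "\<forall>x. 0 \<le> f x" and fn: "\<forall>x<0. f x = 0" and fi0: "set_integrable lborel {0..} f"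
  shows "(LBINT u:{0..}. f u) = 1"
proof -
  have e: "emeasure M (X -` UNIV \<inter> space M) = (\<integral>\<^sup>+x. ennreal (f x) * indicator UNIV x \<partial>lborel)"
    by (rule distributed_emeasure[OF dist]) auto
  have "emeasure M (space M) = 1" using P by (simp add: prob_space.emeasure_space_1)
  then have n1: "(\<integral>\<^sup>+x. ennreal (f x) \<partial>lborel) = 1" using e by simp
  have eqf: "indicator {0..} u *\<^sub>R f u = f u" for u
    using fn by (cases "u < 0") (auto simp: indicator_def)
  have "integrable lborel (\<lambda>u. indicator {0..} u *\<^sub>R f u)" using fi0 by (simp add: set_integrable_def)
  then have fi: "integrable lborel f" unfolding eqf .
  have "(\<integral>\<^sup>+x. ennreal (f x) \<partial>lborel) = ennreal (integral\<^sup>L lborel f)"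
    by (rule nn_integral_eq_integral[OF fi]) (use f0 in auto)
  then have "ennreal (integral\<^sup>L lborel f) = 1" using n1 by simp
  then have "integral\<^sup>L lborel f = 1"
    using integral_nonneg_AE[of f lborel] f0 by (simp add: ennreal_eq_1)
  then show ?thesis unfolding set_lebesgue_integral_def eqf .
qed

lemma convex_final:
  assumes PX: "Tprops TX" and PY: "Tprops TY" and nb: "\<not> Bad TX TY"
  shows "convex_on {x. 0 \<le> x \<and> 0 < TX x} (\<lambda>x. Tinv TY (TX x))"
proof (rule convex_onI)
  have mono: "TX y \<le> TX x" if "0 \<le> x" "x \<le> y" for x y using PX that unfolding Tprops_def by auto
  show "convex {x. 0 \<le> x \<and> 0 < TX x}"
    unfolding convex_def
  proof (intro ballI allI impI)
    fix x y u v :: real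
    assume x: "x \<in> {x. 0 \<le> x \<and> 0 < TX x}" and y: "y \<in> {x. 0 \<le> x \<and> 0 < TX x}"
      and uv: "0 \<le> u" "0 \<le> v" "u + v = 1"
    define w where "w = u * x + v * y"
    have w1: "min x y \<le> w"
    proof -
      have "u * min x y + v * min x y \<le> w" unfolding w_def
        using uv by (intro add_mono mult_left_mono) auto
      then show ?thesis using uv by (simp add: distrib_right[symmetric])
    qed
    have w2: "w \<le> max x y"
    proof -
      have "w \<le> u * max x y + v * max x y" unfolding w_def
        using uv by (intro add_mono mult_left_mono) auto
      then show ?thesis using uv by (simp add: distrib_right[symmetric])
    qed
    have w0: "0 \<le> w" using w1 x y by (auto simp: min_def split: if_splits)
    have "TX (max x y) \<le> TX w" by (rule mono[OF w0 w2])
    moreover have "0 < TX (max x y)" using x y by (auto simp: max_def)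
    ultimately show "u *\<^sub>R x + v *\<^sub>R y \<in> {x. 0 \<le> x \<and> 0 < TX x}" using w0 by (simp add: w_def)
  qed
  fix t x y :: real
  assume t: "0 < t" "t < 1" and x: "x \<in> {x. 0 \<le> x \<and> 0 < TX x}" and y: "y \<in> {x. 0 \<le> x \<and> 0 < TX x}"
  show "Tinv TY (TX ((1 - t) *\<^sub>R x + t *\<^sub>R y)) \<le> (1 - t) * Tinv TY (TX x) + t * Tinv TY (TX y)"
  proof (cases x y rule: linorder_cases)
    case less
    then show ?thesis using chord_ineq[OF PX PY nb _ less _ t] x y by simp
  next
    case equal
    then show ?thesis by (simp add: algebra_simps)
  next
    case greater
    have t': "0 < 1 - t" "1 - t < 1" using t by auto
    have "Tinv TY (TX ((1 - (1 - t)) * y + (1 - t) * x)) \<le> (1 - (1 - t)) * Tinv TY (TX y) + (1 - t) * Tinv TY (TX x)"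
      using chord_ineq[OF PX PY nb _ greater _ t'] x y by simp
    then show ?thesis by (simp add: algebra_simps)
  qed
qed

theorem theorem7:
  fixes M :: "'a measure" and X Y :: "'a \<Rightarrow> real" and fX fY :: "real \<Rightarrow> real"
    and s k :: nat
  assumes "prob_space M"
    and "distributed M lborel X (\<lambda>x. ennreal (fX x))"
    and "distributed M lborel Y (\<lambda>x. ennreal (fY x))"
    and "\<forall>x. 0 \<le> fX x" and "\<forall>x. 0 \<le> fY x"
    and "\<forall>x<0. fX x = 0" and "\<forall>x<0. fY x = 0"
    and "cdf (distr M borel X) \<in> distF_family"
    and "cdf (distr M borel Y) \<in> distF_family"
    and "\<forall>j<s. set_integrable lborel {0..} (Tbar fX j)"
    and "\<forall>j<s. set_integrable lborel {0..} (Tbar fY j)"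
    and "1 \<le> s" and "1 \<le> k" and "k \<le> s"
    and "\<forall>a>0. \<forall>b. sign_changes_le2_pmp (H_fun s k fX fY a b) {0..}"
  shows "s_IFR_le s fX fY"
proof -
  note intX = assms(10) and intY = assms(11)
  have iX0: "set_integrable lborel {0..} fX" using intX assms(12) by (metis Tbar.simps(1) less_one order_less_le_trans zero_less_one)
  have iY0: "set_integrable lborel {0..} fY" using intY assms(12) by (metis Tbar.simps(1) less_one order_less_le_trans zero_less_one)
  have oX: "(LBINT u:{0..}. fX u) = 1" by (rule density_one[OF assms(1,2,4,6) iX0])
  have oY: "(LBINT u:{0..}. fY u) = 1" by (rule density_one[OF assms(1,3,5,7) iY0])
  have PX: "Tprops (Tbar fX s)"
    using Tbar_props[OF assms(4) intX oX assms(12) order_refl] by (simp add: Tprops_def)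
  have PY: "Tprops (Tbar fY s)"
    using Tbar_props[OF assms(5) intY oY assms(12) order_refl] by (simp add: Tprops_def)
  have nb: "\<not> Bad (Tbar fX s) (Tbar fY s)"
  proof
    assume "Bad (Tbar fX s) (Tbar fY s)"
    then obtain y1 z1 y z y2 z2 where "0 \<le> y1" "0 \<le> z1" "z1 < z" "z < z2" "y1 < y2"
      "(y - y1) * (z2 - z1) = (y2 - y1) * (z - z1)"
      "Tbar fY s z1 \<le> Tbar fX s y1" "Tbar fX s y < Tbar fY s z" "Tbar fY s z2 < Tbar fX s y2"
      unfolding Bad_def by blast
    then show False using no_bad[OF intX intY assms(13,14,15)] by blast
  qed
  show ?thesis unfolding s_IFR_le_def by (rule convex_final[OF PX PY nb])
qed

end
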